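(* Let $\mathcal{H}=\mathbb{R}^3$ with points written $(\mathbf{x},y)$, $\mathbf{x}=(x_1,x_2)\in\mathbb{R}^2$, $y\in\mathbb{R}$, be the Heisenberg group with product $(\mathbf{x},y)\cdot(\mathbf{a},b)=(\mathbf{x}+\mathbf{a},\,y+b+x_1a_2)$, let $\Gamma=\{(\mathbf{x},y):\mathbf{x}\in\mathbb{Z}^2,\ y\in\tfrac12\mathbb{Z}\}$ and $N=\mathcal{H}/\Gamma$ with projection $\pi$. Let $\Phi(\mathbf{x},y)=(B\mathbf{x},\,y+x_1^2+\tfrac12x_2^2+x_1x_2)$ with $B=\begin{pmatrix}2&1\\1&1\end{pmatrix}$, and let $f\colon N\to N$ be the diffeomorphism with $f\circ\pi=\pi\circ\Phi$. Then $f$ is partially hyperbolic with splitting $TN=E^s\oplus E^c\oplus E^u$, and the bundle $E^{cu}=E^c\oplus E^u$ is trivial, with global frame given (in the fundamental domain $\{0\le x_1,x_2\le1,\ 0\le y\le\tfrac12\}$) by $v_1=(\mathbf{0},1)$ and $v_2=(\mathbf{v}^u_B,x_2q_1)$, where $\mathbf{v}^u_B=(q_1,q_2)$ is an eigenvector of $B$ for its eigenvalue $>1$. For $\theta\in\mathbb{R}$ define the cocycle $F_\theta\colon TN\to TN$ over $f$ by $F_\theta(p,v)=(f(p),Df(p)R_\theta v)$ for $v\in E^{cu}(p)$ and $F_\theta(p,v)=(f(p),Df(p)v)$ for $v\in E^s(p)$, where $R_\theta$ acts on each fiber of $E^{cu}$ as the rotation by angle $\theta$ in the coordinates of the frame $(v_2,v_1)$.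 Then there is a non-empty open set $\mathcal{I}\subseteq[0,2\pi]$ such that for every $\theta\in\mathcal{I}$ the cocycle $F_\theta$ is partially hyperbolic with an invariant splitting $TN=E^s_\theta\oplus E^c_\theta\oplus E^u_\theta$, and $F_\theta$ is non-uniformly hyperbolic (all its Lyapunov exponents with respect to the Lebesgue (Haar) measure on $N$ are non-zero).
   Context: The Lebesgue measure on $N$ is $f$-invariant and ergodic. The derivative cocycle $F=F_0$, $F(p,v)=(f(p),Df(p)v)$, has Lyapunov exponents $-\lambda^u=\lambda^s<\lambda^c=0<\lambda^u$. A cocycle on $TN$ over $f$ is called partially hyperbolic with splitting $E^s\oplus E^c\oplus E^u$ if this is a continuous invariant splitting into line bundles with $E^s$ uniformly contracted, $E^u$ uniformly expanded, and each bundle dominated by the next one. *)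

theory Defs
  imports "HOL-Analysis.Analysis"
begin

text \<open>The Heisenberg group is modelled as real^3 with coordinates (x1,x2,y) = (p$1,p$2,p$3).
  The nilmanifold N = H/Gamma (right cosets) is modelled through its universal cover:
  objects on N are Gamma-equivariant objects on H. Tangent vectors at p are vectors of real^3
  (standard coordinates); the Riemannian metric on N is the right-invariant metric on H.\<close>

definition mk3 :: "real \<Rightarrow> real \<Rightarrow> real \<Rightarrow> real^3" where
  "mk3 a b c = (\<chi> i. if i = 1 then a else if i = 2 then b else c)"

definition hmul :: "real^3 \<Rightarrow> real^3 \<Rightarrow> real^3" where
  "hmul p q = mk3 (p$1 + q$1) (p$2 + q$2) (p$3 + q$3 + p$1 * q$2)"

definition hinv :: "real^3 \<Rightarrow> real^3" where
  "hinv p = mk3 (- p$1) (- p$2) (- p$3 + p$1 * p$2)"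

definition Gam :: "(real^3) set" where
  "Gam = {g. g$1 \<in> \<int> \<and> g$2 \<in> \<int> \<and> 2 * g$3 \<in> \<int>}"

text \<open>Derivative at p of the right translation by g (the covering identifications act by these).\<close>
definition DRt :: "real^3 \<Rightarrow> real^3 \<Rightarrow> real^3 \<Rightarrow> real^3" where
  "DRt g p = frechet_derivative (\<lambda>q. hmul q g) (at p)"

definition hnorm :: "real^3 \<Rightarrow> real^3 \<Rightarrow> real" where
  "hnorm p v = norm (DRt (hinv p) p v)"

definition Bmat :: "real^2^2" where
  "Bmat = (\<chi> i j. if i = 1 \<and> j = 1 then 2 else 1)"

definition Phi :: "real^3 \<Rightarrow> real^3" where
  "Phi p = mk3 (2 * p$1 + p$2) (p$1 + p$2) (p$3 + (p$1)^2 + (p$2)^2 / 2 + p$1 * p$2)"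

definition Df :: "real^3 \<Rightarrow> real^3 \<Rightarrow> real^3" where
  "Df p = frechet_derivative Phi (at p)"

fun cocn :: "('a \<Rightarrow> 'a) \<Rightarrow> ('a \<Rightarrow> 'b \<Rightarrow> 'b) \<Rightarrow> nat \<Rightarrow> 'a \<Rightarrow> 'b \<Rightarrow> 'b" where
  "cocn g M 0 p = id"
| "cocn g M (Suc n) p = M ((g ^^ n) p) \<circ> cocn g M n p"

definition cont_line_bundle :: "(real^3 \<Rightarrow> (real^3) set) \<Rightarrow> bool" where
  "cont_line_bundle E \<longleftrightarrow> (\<forall>p. \<exists>U X. open U \<and> p \<in> U \<and> continuous_on U X \<and>
      (\<forall>x\<in>U. X x \<noteq> 0 \<and> E x = span {X x}))"

definition gam_equivariant :: "(real^3 \<Rightarrow> (real^3) set) \<Rightarrow> bool" where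
  "gam_equivariant E \<longleftrightarrow> (\<forall>p g. g \<in> Gam \<longrightarrow> E (hmul p g) = DRt g p ` E p)"

definition invariant_bundle :: "(real^3 \<Rightarrow> real^3) \<Rightarrow> (real^3 \<Rightarrow> real^3 \<Rightarrow> real^3)
    \<Rightarrow> (real^3 \<Rightarrow> (real^3) set) \<Rightarrow> bool" where
  "invariant_bundle g M E \<longleftrightarrow> (\<forall>p. M p ` E p = E (g p))"

definition unif_contracted :: "(real^3 \<Rightarrow> real^3) \<Rightarrow> (real^3 \<Rightarrow> real^3 \<Rightarrow> real^3)
    \<Rightarrow> (real^3 \<Rightarrow> (real^3) set) \<Rightarrow> bool" where
  "unif_contracted g M E \<longleftrightarrow> (\<exists>C lam. C > 0 \<and> 0 < lam \<and> lam < 1 \<and>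
     (\<forall>p n v. v \<in> E p \<longrightarrow> hnorm ((g ^^ n) p) (cocn g M n p v) \<le> C * lam ^ n * hnorm p v))"

definition unif_expanded :: "(real^3 \<Rightarrow> real^3) \<Rightarrow> (real^3 \<Rightarrow> real^3 \<Rightarrow> real^3)
    \<Rightarrow> (real^3 \<Rightarrow> (real^3) set) \<Rightarrow> bool" where
  "unif_expanded g M E \<longleftrightarrow> (\<exists>C lam. C > 0 \<and> lam > 1 \<and>
     (\<forall>p n v. v \<in> E p \<longrightarrow> hnorm ((g ^^ n) p) (cocn g M n p v) \<ge> C * lam ^ n * hnorm p v))"

definition dominated :: "(real^3 \<Rightarrow> real^3) \<Rightarrow> (real^3 \<Rightarrow> real^3 \<Rightarrow> real^3)
    \<Rightarrow> (real^3 \<Rightarrow> (real^3) set) \<Rightarrow> (real^3 \<Rightarrow> (real^3) set) \<Rightarrow> bool" where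
  "dominated g M E E' \<longleftrightarrow> (\<exists>C lam. C > 0 \<and> 0 < lam \<and> lam < 1 \<and>
     (\<forall>p n u w. u \<in> E p \<longrightarrow> w \<in> E' p \<longrightarrow>
        hnorm ((g ^^ n) p) (cocn g M n p u) * hnorm p w
          \<le> C * lam ^ n * hnorm ((g ^^ n) p) (cocn g M n p w) * hnorm p u))"

definition partially_hyperbolic :: "(real^3 \<Rightarrow> real^3) \<Rightarrow> (real^3 \<Rightarrow> real^3 \<Rightarrow> real^3)
    \<Rightarrow> (real^3 \<Rightarrow> (real^3) set) \<Rightarrow> (real^3 \<Rightarrow> (real^3) set) \<Rightarrow> (real^3 \<Rightarrow> (real^3) set) \<Rightarrow> bool" where
  "partially_hyperbolic g M Es Ec Eu \<longleftrightarrow>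
     cont_line_bundle Es \<and> cont_line_bundle Ec \<and> cont_line_bundle Eu \<and>
     gam_equivariant Es \<and> gam_equivariant Ec \<and> gam_equivariant Eu \<and>
     invariant_bundle g M Es \<and> invariant_bundle g M Ec \<and> invariant_bundle g M Eu \<and>
     (\<forall>p. span (Es p \<union> Ec p \<union> Eu p) = UNIV) \<and>
     unif_contracted g M Es \<and> unif_expanded g M Eu \<and>
     dominated g M Es Ec \<and> dominated g M Ec Eu"

definition nonuniformly_hyperbolic :: "(real^3 \<Rightarrow> real^3) \<Rightarrow> (real^3 \<Rightarrow> real^3 \<Rightarrow> real^3) \<Rightarrow> bool" where
  "nonuniformly_hyperbolic g M \<longleftrightarrow>
     (AE p in lborel. \<forall>v. v \<noteq> 0 \<longrightarrow> (\<exists>L. L \<noteq> 0 \<and>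
        ((\<lambda>n. ln (hnorm ((g ^^ n) p) (cocn g M n p v)) / real n) \<longlongrightarrow> L) sequentially))"

definition v1 :: "real^3 \<Rightarrow> real^3" where "v1 p = mk3 0 0 1"
definition v2 :: "real^2 \<Rightarrow> real^3 \<Rightarrow> real^3" where "v2 q p = mk3 (q$1) (q$2) (p$2 * q$1)"
definition es :: "real^2 \<Rightarrow> real^3 \<Rightarrow> real^3" where "es s p = mk3 (s$1) (s$2) (p$2 * s$1)"

definition Rot :: "real \<Rightarrow> real^2 \<Rightarrow> real^2 \<Rightarrow> real^3 \<Rightarrow> real^3 \<Rightarrow> real^3" where
  "Rot \<theta> q s p = (SOME L. linear L \<and> L (es s p) = es s p \<and>
      L (v2 q p) = cos \<theta> *\<^sub>R v2 q p + sin \<theta> *\<^sub>R v1 p \<and>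
      L (v1 p) = (- sin \<theta>) *\<^sub>R v2 q p + cos \<theta> *\<^sub>R v1 p)"

definition Ftheta :: "real \<Rightarrow> real^2 \<Rightarrow> real^2 \<Rightarrow> real^3 \<Rightarrow> real^3 \<Rightarrow> real^3" where
  "Ftheta \<theta> q s p = Df p \<circ> Rot \<theta> q s p"

end

theory Submission
  imports Defs
begin


lemma mk3_nth[simp]: "mk3 a b c $ 1 = a" "mk3 a b c $ 2 = b" "mk3 a b c $ 3 = c"
  by (simp_all add: mk3_def)

lemma mk3_eq_iff: "mk3 a b c = mk3 a' b' c' \<longleftrightarrow> a = a' \<and> b = b' \<and> c = c'"
  by (auto simp: vec_eq_iff forall_3)

lemma vec3_eqI: "x$1 = y$1 \<Longrightarrow> x$2 = y$2 \<Longrightarrow> x$3 = (y::real^3)$3 \<Longrightarrow> x = y"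
  by (simp add: vec_eq_iff forall_3)

lemma mk3_decomp: "mk3 a b c = a *\<^sub>R axis 1 1 + b *\<^sub>R axis 2 1 + c *\<^sub>R axis 3 1"
  by (rule vec3_eqI) (simp_all add: axis_def)

lemma hd_nth[derivative_intros]: "((\<lambda>x::real^3. x $ i) has_derivative (\<lambda>v. v $ i)) F"
  by (rule bounded_linear_imp_has_derivative) (rule bounded_linear_vec_nth)

lemma hmul_deriv: "((\<lambda>q. hmul q g) has_derivative (\<lambda>v. mk3 (v$1) (v$2) (v$3 + v$1 * g$2))) (at p)"
  unfolding hmul_def mk3_decomp
  apply (rule has_derivative_eq_rhs)
   apply (rule derivative_eq_intros | simp)+
  done




lemma DRt_eq: "DRt g p = (\<lambda>v. mk3 (v$1) (v$2) (v$3 + v$1 * g$2))"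
  unfolding DRt_def by (rule frechet_derivative_at[symmetric]) (rule hmul_deriv)

lemma Phi_deriv: "(Phi has_derivative (\<lambda>v. mk3 (2* v$1 + v$2) (v$1 + v$2)
   (v$3 + 2*p$1* v$1 + p$2* v$2 + p$1* v$2 + p$2* v$1))) (at p)"
  unfolding Phi_def[abs_def] mk3_decomp
  apply (rule has_derivative_eq_rhs)
   apply (rule derivative_eq_intros | simp)+
  apply (rule ext) apply (simp add: algebra_simps)
  done

lemma Df_eq: "Df p = (\<lambda>v. mk3 (2* v$1 + v$2) (v$1 + v$2)
   (v$3 + 2*p$1* v$1 + p$2* v$2 + p$1* v$2 + p$2* v$1))"
  unfolding Df_def by (rule frechet_derivative_at[symmetric]) (rule Phi_deriv)

definition U :: "real^3 \<Rightarrow> real^3 \<Rightarrow> real^3" where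
  "U p v = mk3 (v$1) (v$2) (v$3 - v$1 * p$2)"
definition Ui :: "real^3 \<Rightarrow> real^3 \<Rightarrow> real^3" where
  "Ui p v = mk3 (v$1) (v$2) (v$3 + v$1 * p$2)"

lemma hnorm_U: "hnorm p v = norm (U p v)"
  unfolding hnorm_def DRt_eq U_def hinv_def by simp

lemma U_Ui[simp]: "U p (Ui p v) = v" and Ui_U[simp]: "Ui p (U p v) = v"
  by (rule vec3_eqI; simp add: U_def Ui_def)+

lemma linear_U: "linear (U p)" and linear_Ui: "linear (Ui p)"
  by (rule linearI; rule vec3_eqI; simp add: U_def Ui_def algebra_simps)+

definition A0 :: "real^3 \<Rightarrow> real^3" where
  "A0 v = mk3 (2* v$1 + v$2) (v$1 + v$2) (v$3)"

lemma linear_A0: "linear A0"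
  by (rule linearI; rule vec3_eqI; simp add: A0_def algebra_simps)

lemma Df_conj: "Df p = Ui (Phi p) \<circ> A0 \<circ> U p"
  by (rule ext, rule vec3_eqI) (simp_all add: Df_eq Ui_def A0_def U_def Phi_def algebra_simps)

lemma DRt_Ui: "DRt g p (Ui p e) = Ui (hmul p g) e"
  by (rule vec3_eqI) (simp_all add: DRt_eq Ui_def hmul_def algebra_simps)

lemma linear_DRt: "linear (DRt g p)"
  unfolding DRt_eq by (rule linearI; rule vec3_eqI; simp add: algebra_simps)




definition tri :: "real^3 \<Rightarrow> real^3 \<Rightarrow> real^3 \<Rightarrow> bool" where
  "tri x y z \<longleftrightarrow> (\<forall>a b c. a *\<^sub>R x + b *\<^sub>R y + c *\<^sub>R z = 0 \<longrightarrow> a = 0 \<and> b = 0 \<and> c = 0)"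

definition T3 :: "real^3 \<Rightarrow> real^3 \<Rightarrow> real^3 \<Rightarrow> real^3 \<Rightarrow> real^3" where
  "T3 x y z w = w$1 *\<^sub>R x + w$2 *\<^sub>R y + w$3 *\<^sub>R z"

lemma linear_T3: "linear (T3 x y z)"
  unfolding T3_def by (rule linearI) (simp_all add: algebra_simps)

lemma T3_inj: "tri x y z \<Longrightarrow> inj (T3 x y z)"
proof -
  assume t: "tri x y z"
  show ?thesis
  proof (rule linear_injective_0[THEN iffD2, OF linear_T3], intro allI impI)
    fix w assume "T3 x y z w = 0"
    then have "w$1 = 0 \<and> w$2 = 0 \<and> w$3 = 0" using t unfolding tri_def T3_def by blast
    then show "w = 0" by (simp add: vec_eq_iff forall_3)
  qed
qed

lemma tri_span: assumes "tri x y z" shows "\<exists>a b c. v = a *\<^sub>R x + b *\<^sub>R y + c *\<^sub>R z"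
proof -
  have "surj (T3 x y z)"
    by (rule linear_injective_imp_surjective[OF linear_T3 T3_inj[OF assms]]) simp
  then obtain w where "v = T3 x y z w" by blast
  then show ?thesis unfolding T3_def by blast
qed

lemma tri_lower: assumes "tri x y z"
  shows "\<exists>m>0. \<forall>a b c. norm (a *\<^sub>R x + b *\<^sub>R y + c *\<^sub>R z) \<ge> m * \<bar>a\<bar> \<and>
     norm (a *\<^sub>R x + b *\<^sub>R y + c *\<^sub>R z) \<ge> m * \<bar>b\<bar> \<and> norm (a *\<^sub>R x + b *\<^sub>R y + c *\<^sub>R z) \<ge> m * \<bar>c\<bar>"
proof -
  have bl: "bounded_linear (T3 x y z)" using linear_T3 linear_conv_bounded_linear by blast
  have "\<forall>w\<in>UNIV. T3 x y z w = 0 \<longrightarrow> w = 0"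
    using T3_inj[OF assms] linear_injective_0[OF linear_T3] by blast
  then obtain m where m: "m > 0" "\<forall>w. norm (T3 x y z w) \<ge> m * norm w"
    using injective_imp_isometric[of UNIV "T3 x y z"] bl by auto
  show ?thesis
  proof (intro exI[of _ m] conjI allI)
    fix a b c
    let ?w = "mk3 a b c"
    have e: "T3 x y z ?w = a *\<^sub>R x + b *\<^sub>R y + c *\<^sub>R z" by (simp add: T3_def)
    have "\<bar>?w$1\<bar> \<le> norm ?w" "\<bar>?w$2\<bar> \<le> norm ?w" "\<bar>?w$3\<bar> \<le> norm ?w"
      by (rule component_le_norm_cart)+
    then show "norm (a *\<^sub>R x + b *\<^sub>R y + c *\<^sub>R z) \<ge> m * \<bar>a\<bar>"
      "norm (a *\<^sub>R x + b *\<^sub>R y + c *\<^sub>R z) \<ge> m * \<bar>b\<bar>"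
      "norm (a *\<^sub>R x + b *\<^sub>R y + c *\<^sub>R z) \<ge> m * \<bar>c\<bar>"
    proof -
      have n: "norm (a *\<^sub>R x + b *\<^sub>R y + c *\<^sub>R z) \<ge> m * norm ?w" using m(2) e by metis
      have "\<bar>a\<bar> \<le> norm ?w" "\<bar>b\<bar> \<le> norm ?w" "\<bar>c\<bar> \<le> norm ?w"
        using \<open>\<bar>?w$1\<bar> \<le> norm ?w\<close> \<open>\<bar>?w$2\<bar> \<le> norm ?w\<close> \<open>\<bar>?w$3\<bar> \<le> norm ?w\<close> by simp_all
      then have "m * \<bar>a\<bar> \<le> m * norm ?w" "m * \<bar>b\<bar> \<le> m * norm ?w" "m * \<bar>c\<bar> \<le> m * norm ?w"
        using m(1) by (simp_all add: mult_left_mono)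
      then show "norm (a *\<^sub>R x + b *\<^sub>R y + c *\<^sub>R z) \<ge> m * \<bar>a\<bar>"
      "norm (a *\<^sub>R x + b *\<^sub>R y + c *\<^sub>R z) \<ge> m * \<bar>b\<bar>"
      "norm (a *\<^sub>R x + b *\<^sub>R y + c *\<^sub>R z) \<ge> m * \<bar>c\<bar>" using n by linarith+
    qed
  qed (rule m(1))
qed

lemma ext3: assumes "tri x y z"
  shows "\<exists>L. linear L \<and> L x = u \<and> L y = v \<and> L z = w"
proof -
  obtain g where g: "linear g" "g \<circ> T3 x y z = id"
    using linear_injective_left_inverse[OF linear_T3 T3_inj[OF assms]] by blast
  define L where "L r = (g r)$1 *\<^sub>R u + (g r)$2 *\<^sub>R v + (g r)$3 *\<^sub>R w" for r
  have lin: "linear L" unfolding L_def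
    by (rule linearI) (simp_all add: linear_add[OF g(1)] linear_scale[OF g(1)] algebra_simps)
  have gx: "g (T3 x y z r) = r" for r using g(2) by (metis comp_apply id_apply)
  have "T3 x y z (mk3 1 0 0) = x" "T3 x y z (mk3 0 1 0) = y" "T3 x y z (mk3 0 0 1) = z"
    by (simp_all add: T3_def)
  then have "g x = mk3 1 0 0" "g y = mk3 0 1 0" "g z = mk3 0 0 1" using gx by metis+
  then show ?thesis using lin by (auto simp: L_def)
qed

lemma lin_eq3: assumes "tri x y z" "linear L" "linear L'" "L x = L' x" "L y = L' y" "L z = L' z"
  shows "L = L'"
proof
  fix v
  obtain a b c where "v = a *\<^sub>R x + b *\<^sub>R y + c *\<^sub>R z" using tri_span[OF assms(1)] by blast
  then show "L v = L' v" using assms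
    by (simp add: linear_add linear_scale)
qed

lemma tri_map: assumes "linear f" "tri (f x) (f y) (f z)" shows "tri x y z"
  unfolding tri_def
proof (intro allI impI)
  fix a b c assume "a *\<^sub>R x + b *\<^sub>R y + c *\<^sub>R z = 0"
  then have "f (a *\<^sub>R x + b *\<^sub>R y + c *\<^sub>R z) = 0" using linear_0[OF assms(1)] by simp
  then have "a *\<^sub>R f x + b *\<^sub>R f y + c *\<^sub>R f z = 0"
    by (simp add: linear_add[OF assms(1)] linear_scale[OF assms(1)])
  then show "a = 0 \<and> b = 0 \<and> c = 0" using assms(2) unfolding tri_def by blast
qed

lemma tri_eigen:
  assumes C: "linear C" and e: "C x = a *\<^sub>R x" "C y = b *\<^sub>R y" "C z = c *\<^sub>R z"
    and nz: "x \<noteq> 0" "y \<noteq> 0" "z \<noteq> 0" and d: "a \<noteq> b" "a \<noteq> c" "b \<noteq> c"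
  shows "tri x y z"
  unfolding tri_def
proof (intro allI impI)
  fix \<alpha> \<beta> \<gamma> assume h0: "\<alpha> *\<^sub>R x + \<beta> *\<^sub>R y + \<gamma> *\<^sub>R z = 0"
  have h1: "(\<alpha>*a) *\<^sub>R x + (\<beta>*b) *\<^sub>R y + (\<gamma>*c) *\<^sub>R z = 0"
    using arg_cong[OF h0, of C] e by (simp add: linear_add[OF C] linear_scale[OF C] linear_0[OF C])
  have h2: "(\<alpha>*(a-c)) *\<^sub>R x + (\<beta>*(b-c)) *\<^sub>R y = 0"
  proof -
    have "(\<alpha>*a) *\<^sub>R x + (\<beta>*b) *\<^sub>R y + (\<gamma>*c) *\<^sub>R z - c *\<^sub>R (\<alpha> *\<^sub>R x + \<beta> *\<^sub>R y + \<gamma> *\<^sub>R z) = 0"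
      using h0 h1 by simp
    then show ?thesis by (simp add: algebra_simps)
  qed
  have h3: "(\<alpha>*(a-c)*a) *\<^sub>R x + (\<beta>*(b-c)*b) *\<^sub>R y = 0"
    using arg_cong[OF h2, of C] e by (simp add: linear_add[OF C] linear_scale[OF C] linear_0[OF C] mult.assoc)
  have h4: "(\<alpha>*(a-c)*(a-b)) *\<^sub>R x = 0"
  proof -
    have "(\<alpha>*(a-c)*a) *\<^sub>R x + (\<beta>*(b-c)*b) *\<^sub>R y - b *\<^sub>R ((\<alpha>*(a-c)) *\<^sub>R x + (\<beta>*(b-c)) *\<^sub>R y) = 0"
      using h2 h3 by simp
    then show ?thesis by (simp add: algebra_simps)
  qed
  then have "\<alpha> = 0" using nz d by simp
  with h2 have "\<beta> = 0" using nz d by simp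
  with h0 \<open>\<alpha> = 0\<close> have "\<gamma> = 0" using nz by simp
  then show "\<alpha> = 0 \<and> \<beta> = 0 \<and> \<gamma> = 0" using \<open>\<alpha> = 0\<close> \<open>\<beta> = 0\<close> by simp
qed




lemma span1: "span {x} = range (\<lambda>k. k *\<^sub>R x)"
  by (rule span_singleton)

lemma lin_img_span1: "linear f \<Longrightarrow> f ` span {x} = span {f x}"
  unfolding span1 by (auto simp: linear_scale image_iff)

lemma span1_scale: "k \<noteq> 0 \<Longrightarrow> span {k *\<^sub>R x} = span {x}"
  unfolding span1
proof (rule set_eqI, rule iffI)
  fix y assume "y \<in> range (\<lambda>t. t *\<^sub>R k *\<^sub>R x)"
  then obtain t where "y = t *\<^sub>R k *\<^sub>R x" by blast
  then show "y \<in> range (\<lambda>t. t *\<^sub>R x)" by (metis rangeI scaleR_scaleR)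
next
  fix y assume k: "k \<noteq> 0" and "y \<in> range (\<lambda>t. t *\<^sub>R x)"
  then obtain t where "y = t *\<^sub>R x" by blast
  then have "y = (t / k) *\<^sub>R k *\<^sub>R x" using k by simp
  then show "y \<in> range (\<lambda>t. t *\<^sub>R k *\<^sub>R x)" by blast
qed

lemma cocn_conj:
  assumes "\<And>p. M p = Ui (g p) \<circ> C \<circ> U p"
  shows "cocn g M n p = Ui ((g^^n) p) \<circ> (C^^n) \<circ> U p"
proof (induction n)
  case 0 show ?case by (auto simp: fun_eq_iff)
next
  case (Suc n) then show ?case by (simp add: assms fun_eq_iff)
qed

lemma Cpow_eig: "linear C \<Longrightarrow> C e = k *\<^sub>R e \<Longrightarrow> (C^^n) (t *\<^sub>R e) = (t * k^n) *\<^sub>R e"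
  by (induction n) (simp_all add: linear_scale)

lemma scale_bundle:
  assumes M: "\<And>p. M p = Ui (g p) \<circ> C \<circ> U p" and C: "linear C" and e: "C e = k *\<^sub>R e"
    and v: "v \<in> span {Ui p e}"
  shows "hnorm ((g^^n) p) (cocn g M n p v) = \<bar>k\<bar>^n * hnorm p v"
proof -
  obtain t where t: "v = t *\<^sub>R Ui p e" using v unfolding span1 by blast
  have Uv: "U p v = t *\<^sub>R e" using t by (simp add: linear_scale[OF linear_U])
  show ?thesis
    by (simp add: cocn_conj[OF M] hnorm_U Uv Cpow_eig[OF C e] power_abs abs_mult)
qed

lemma ph_framework:
  assumes M: "\<And>p. M p = Ui (g p) \<circ> C \<circ> U p" and C: "linear C"
    and e: "C e1 = k1 *\<^sub>R e1" "C e2 = k2 *\<^sub>R e2" "C e3 = k3 *\<^sub>R e3"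
    and t: "tri e1 e2 e3"
    and k: "0 < \<bar>k1\<bar>" "\<bar>k1\<bar> < 1" "\<bar>k1\<bar> < \<bar>k2\<bar>" "\<bar>k2\<bar> < \<bar>k3\<bar>" "1 < \<bar>k3\<bar>"
  shows "partially_hyperbolic g M (\<lambda>p. span {Ui p e1}) (\<lambda>p. span {Ui p e2}) (\<lambda>p. span {Ui p e3})"
proof -
  have nz: "e1 \<noteq> 0" "e2 \<noteq> 0" "e3 \<noteq> 0" using t unfolding tri_def
    by (metis scaleR_one scaleR_zero_left add_0 add.right_neutral zero_neq_one)+
  have cont: "cont_line_bundle (\<lambda>p. span {Ui p e})" if "e \<noteq> 0" for e
    unfolding cont_line_bundle_def
  proof (intro allI exI conjI ballI)
    show "continuous_on UNIV (\<lambda>x. Ui x e)"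
      unfolding Ui_def mk3_decomp by (intro continuous_intros)
    fix x show "Ui x e \<noteq> 0" using that U_Ui[of x e] linear_0[OF linear_U] by metis
  qed auto
  have equi: "gam_equivariant (\<lambda>p. span {Ui p e})" for e
    unfolding gam_equivariant_def
    by (simp add: lin_img_span1[OF linear_DRt] DRt_Ui)
  have Mlin: "linear (M p)" for p unfolding M
    by (intro linear_compose linear_U linear_Ui C)
  have inv: "invariant_bundle g M (\<lambda>p. span {Ui p e})" if "C e = k *\<^sub>R e" "k \<noteq> 0" for e k
    unfolding invariant_bundle_def
  proof
    fix p
    have "M p (Ui p e) = k *\<^sub>R Ui (g p) e" by (simp add: M that linear_scale[OF linear_Ui])
    then show "M p ` span {Ui p e} = span {Ui (g p) e}"
      by (simp add: lin_img_span1[OF Mlin] span1_scale that)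
  qed
  have sp: "span (span {Ui p e1} \<union> span {Ui p e2} \<union> span {Ui p e3}) = UNIV" for p
  proof -
    { fix v
      obtain a b c where abc: "U p v = a *\<^sub>R e1 + b *\<^sub>R e2 + c *\<^sub>R e3" using tri_span[OF t] by blast
      have "v = Ui p (U p v)" by simp
      also have "\<dots> = a *\<^sub>R Ui p e1 + b *\<^sub>R Ui p e2 + c *\<^sub>R Ui p e3"
        unfolding abc by (simp add: linear_add[OF linear_Ui] linear_scale[OF linear_Ui])
      finally have v: "v = a *\<^sub>R Ui p e1 + b *\<^sub>R Ui p e2 + c *\<^sub>R Ui p e3" .
      let ?S = "span {Ui p e1} \<union> span {Ui p e2} \<union> span {Ui p e3}"
      have "Ui p e1 \<in> span ?S" "Ui p e2 \<in> span ?S" "Ui p e3 \<in> span ?S"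
        by (auto intro: span_base)
      then have "v \<in> span ?S" unfolding v by (intro span_add span_scale)
    }
    then show ?thesis by auto
  qed
  have sb: "hnorm ((g^^n) p) (cocn g M n p v) = \<bar>k\<bar>^n * hnorm p v"
    if "C e = k *\<^sub>R e" "v \<in> span {Ui p e}" for e k n p v
    using scale_bundle[OF M C that] .
  have contr: "unif_contracted g M (\<lambda>p. span {Ui p e1})"
    unfolding unif_contracted_def
    by (rule exI[of _ 1], rule exI[of _ "\<bar>k1\<bar>"]) (use k(1) in \<open>auto simp: k sb[OF e(1)]\<close>)
  have exp: "unif_expanded g M (\<lambda>p. span {Ui p e3})"
    unfolding unif_expanded_def
    by (rule exI[of _ 1], rule exI[of _ "\<bar>k3\<bar>"]) (use k in \<open>auto simp: sb[OF e(3)]\<close>)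
  have dom: "dominated g M (\<lambda>p. span {Ui p ea}) (\<lambda>p. span {Ui p eb})"
    if "C ea = ka *\<^sub>R ea" "C eb = kb *\<^sub>R eb" "0 < \<bar>ka\<bar>" "\<bar>ka\<bar> < \<bar>kb\<bar>" for ea eb ka kb
    unfolding dominated_def
  proof (rule exI[of _ 1], rule exI[of _ "\<bar>ka\<bar> / \<bar>kb\<bar>"], intro conjI allI impI)
    show "0 < \<bar>ka\<bar> / \<bar>kb\<bar>" "\<bar>ka\<bar> / \<bar>kb\<bar> < 1" using that by auto
    fix p n u w assume u: "u \<in> span {Ui p ea}" and w: "w \<in> span {Ui p eb}"
    have kb: "\<bar>kb\<bar>^n \<noteq> 0" "kb \<noteq> 0" using that by auto
    show "hnorm ((g ^^ n) p) (cocn g M n p u) * hnorm p w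
          \<le> 1 * (\<bar>ka\<bar> / \<bar>kb\<bar>) ^ n * hnorm ((g ^^ n) p) (cocn g M n p w) * hnorm p u"
      using kb by (simp add: sb[OF that(1) u] sb[OF that(2) w] power_divide)
  qed simp
  show ?thesis unfolding partially_hyperbolic_def
    using cont nz equi inv e k sp contr exp dom[OF e(1) e(2)] dom[OF e(2) e(3)]
    by (auto simp del: span_Un)
qed




lemma ln_squeeze:
  assumes A: "A > 0" and r: "r > 0" and lo: "\<And>n. A * r^n \<le> x n" and up: "\<And>n. x n \<le> B * r^n"
  shows "(\<lambda>n. ln (x n) / real n) \<longlonglongrightarrow> ln r"
proof (rule tendsto_sandwich)
  have B: "B > 0" using lo[of 0] up[of 0] A by simp
  show "\<forall>\<^sub>F n in sequentially. ln A / real n + ln r \<le> ln (x n) / real n"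
  proof (rule eventually_sequentiallyI[of 1])
    fix n :: nat assume n: "1 \<le> n"
    have pos: "A * r^n > 0" using A r by simp
    have "ln (A * r^n) \<le> ln (x n)" using lo[of n] pos by simp
    then have "ln A + n * ln r \<le> ln (x n)" using A r by (simp add: ln_mult ln_realpow)
    then have "(ln A + n * ln r) / n \<le> ln (x n) / n" by (rule divide_right_mono) simp
    moreover have "(ln A + n * ln r) / n = ln A / n + ln r" using n by (simp add: field_simps)
    ultimately show "ln A / real n + ln r \<le> ln (x n) / real n" by simp
  qed
  show "\<forall>\<^sub>F n in sequentially. ln (x n) / real n \<le> ln B / real n + ln r"
  proof (rule eventually_sequentiallyI[of 1])
    fix n :: nat assume n: "1 \<le> n"
    have pos: "A * r^n > 0" using A r by simp
    have "ln (x n) \<le> ln (B * r^n)" using up[of n] lo[of n] pos by simp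
    then have "ln (x n) \<le> ln B + n * ln r" using B r by (simp add: ln_mult ln_realpow)
    then have "ln (x n) / n \<le> (ln B + n * ln r) / n" by (rule divide_right_mono) simp
    moreover have "(ln B + n * ln r) / n = ln B / n + ln r" using n by (simp add: field_simps)
    ultimately show "ln (x n) / real n \<le> ln B / real n + ln r" by simp
  qed
  show "(\<lambda>n. ln A / real n + ln r) \<longlonglongrightarrow> ln r"
    using tendsto_add[OF lim_const_over_n[of "ln A"] tendsto_const[of "ln r"]] by simp
  show "(\<lambda>n. ln B / real n + ln r) \<longlonglongrightarrow> ln r"
    using tendsto_add[OF lim_const_over_n[of "ln B"] tendsto_const[of "ln r"]] by simp
qed

lemma linear_pow: "linear (C::real^3\<Rightarrow>real^3) \<Longrightarrow> linear (C^^n)"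
proof (induction n)
  case 0 show ?case by (rule linearI) simp_all
next
  case (Suc n)
  then have "linear (C \<circ> C^^n)" by (intro linear_compose) auto
  then show ?case by (simp only: funpow.simps(2))
qed

lemma upper3:
  fixes e1 e2 e3 :: "real^3"
  assumes r: "r \<ge> 0" and h: "a \<noteq> 0 \<Longrightarrow> \<bar>k1\<bar> \<le> r" "b \<noteq> 0 \<Longrightarrow> \<bar>k2\<bar> \<le> r" "c \<noteq> 0 \<Longrightarrow> \<bar>k3\<bar> \<le> r"
  shows "norm ((a*k1^n) *\<^sub>R e1 + (b*k2^n) *\<^sub>R e2 + (c*k3^n) *\<^sub>R e3)
     \<le> (\<bar>a\<bar>*norm e1 + \<bar>b\<bar>*norm e2 + \<bar>c\<bar>*norm e3) * r^n"
proof -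
  have t: "norm ((t*k^n) *\<^sub>R e) \<le> \<bar>t\<bar> * norm e * r^n" if "t \<noteq> 0 \<Longrightarrow> \<bar>k\<bar> \<le> r" for t k and e :: "real^3"
  proof (cases "t = 0")
    case False
    then have "\<bar>k\<bar>^n \<le> r^n" using that by (simp add: power_mono)
    then have "\<bar>t\<bar> * norm e * \<bar>k\<bar>^n \<le> \<bar>t\<bar> * norm e * r^n" by (simp add: mult_left_mono)
    then show ?thesis by (simp add: abs_mult power_abs mult_ac)
  qed simp
  have "norm ((a*k1^n) *\<^sub>R e1 + (b*k2^n) *\<^sub>R e2 + (c*k3^n) *\<^sub>R e3)
     \<le> norm ((a*k1^n) *\<^sub>R e1) + norm ((b*k2^n) *\<^sub>R e2) + norm ((c*k3^n) *\<^sub>R e3)"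
    by (meson add_mono norm_triangle_ineq order_trans order_refl)
  also have "\<dots> \<le> \<bar>a\<bar>*norm e1*r^n + \<bar>b\<bar>*norm e2*r^n + \<bar>c\<bar>*norm e3*r^n"
    by (intro add_mono t h)
  finally show ?thesis by (simp add: algebra_simps)
qed

lemma nuh_framework:
  assumes M: "\<And>p. M p = Ui (g p) \<circ> C \<circ> U p" and C: "linear C"
    and e: "C e1 = k1 *\<^sub>R e1" "C e2 = k2 *\<^sub>R e2" "C e3 = k3 *\<^sub>R e3"
    and t: "tri e1 e2 e3"
    and k: "0 < \<bar>k1\<bar>" "\<bar>k1\<bar> < \<bar>k2\<bar>" "\<bar>k2\<bar> < \<bar>k3\<bar>" "\<bar>k1\<bar> \<noteq> 1" "\<bar>k2\<bar> \<noteq> 1" "\<bar>k3\<bar> \<noteq> 1"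
  shows "nonuniformly_hyperbolic g M"
  unfolding nonuniformly_hyperbolic_def
proof (rule AE_I2, intro allI impI)
  fix p v assume v: "v \<noteq> (0::real^3)"
  have w: "U p v \<noteq> 0" using v Ui_U[of p v] linear_0[OF linear_Ui] by metis
  obtain a b c where abc: "U p v = a *\<^sub>R e1 + b *\<^sub>R e2 + c *\<^sub>R e3" using tri_span[OF t] by blast
  have abc0: "\<not> (a = 0 \<and> b = 0 \<and> c = 0)" using w abc by auto
  obtain m where m1: "m > 0" and mm: "\<forall>a b c. norm (a *\<^sub>R e1 + b *\<^sub>R e2 + c *\<^sub>R e3) \<ge> m * \<bar>a\<bar> \<and>
     norm (a *\<^sub>R e1 + b *\<^sub>R e2 + c *\<^sub>R e3) \<ge> m * \<bar>b\<bar> \<and>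
     norm (a *\<^sub>R e1 + b *\<^sub>R e2 + c *\<^sub>R e3) \<ge> m * \<bar>c\<bar>"
    using tri_lower[OF t] by blast
  note m = m1 conjunct1[OF mm[rule_format]] conjunct1[OF conjunct2[OF mm[rule_format]]] conjunct2[OF conjunct2[OF mm[rule_format]]]
  define x where "x n = norm ((a*k1^n) *\<^sub>R e1 + (b*k2^n) *\<^sub>R e2 + (c*k3^n) *\<^sub>R e3)" for n
  have hx: "hnorm ((g ^^ n) p) (cocn g M n p v) = x n" for n
  proof -
    have "(C^^n) (U p v) = (a*k1^n) *\<^sub>R e1 + (b*k2^n) *\<^sub>R e2 + (c*k3^n) *\<^sub>R e3"
      unfolding abc using linear_pow[OF C, of n]
      by (simp add: linear_add Cpow_eig[OF C e(1)] Cpow_eig[OF C e(2)] Cpow_eig[OF C e(3)])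
    then show ?thesis by (simp add: cocn_conj[OF M] hnorm_U x_def)
  qed
  let ?B = "\<bar>a\<bar>*norm e1 + \<bar>b\<bar>*norm e2 + \<bar>c\<bar>*norm e3"
  have "\<exists>r A. r > 0 \<and> r \<noteq> 1 \<and> A > 0 \<and> (\<forall>n. A * r^n \<le> x n) \<and> (\<forall>n. x n \<le> ?B * r^n)"
  proof (cases "c \<noteq> 0")
    case True
    show ?thesis
    proof (intro exI conjI allI)
      fix n
      show "m * \<bar>c\<bar> * \<bar>k3\<bar>^n \<le> x n" using mm[rule_format, of "a*k1^n" "b*k2^n" "c*k3^n"]
        by (simp add: x_def abs_mult power_abs mult.assoc)
      show "x n \<le> ?B * \<bar>k3\<bar>^n" unfolding x_def by (rule upper3) (use k in auto)
    qed (use k True m in auto)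
  next
    case c0: False
    show ?thesis
    proof (cases "b \<noteq> 0")
      case True
      show ?thesis
      proof (intro exI conjI allI)
        fix n
        show "m * \<bar>b\<bar> * \<bar>k2\<bar>^n \<le> x n" using mm[rule_format, of "a*k1^n" "b*k2^n" "c*k3^n"]
          by (simp add: x_def abs_mult power_abs mult.assoc)
        show "x n \<le> ?B * \<bar>k2\<bar>^n" unfolding x_def by (rule upper3) (use k c0 in auto)
      qed (use k True m in auto)
    next
      case b0: False
      then have a: "a \<noteq> 0" using c0 abc0 by auto
      show ?thesis
      proof (intro exI conjI allI)
        fix n
        show "m * \<bar>a\<bar> * \<bar>k1\<bar>^n \<le> x n" using mm[rule_format, of "a*k1^n" "b*k2^n" "c*k3^n"]
          by (simp add: x_def abs_mult power_abs mult.assoc)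
        show "x n \<le> ?B * \<bar>k1\<bar>^n" unfolding x_def by (rule upper3) (use k c0 b0 in auto)
      qed (use k a m in auto)
    qed
  qed
  then obtain r A where rA: "r > 0" "r \<noteq> 1" "A > 0" "\<And>n. A * r^n \<le> x n" "\<And>n. x n \<le> ?B * r^n"
    by blast
  show "\<exists>L. L \<noteq> 0 \<and> ((\<lambda>n. ln (hnorm ((g ^^ n) p) (cocn g M n p v)) / real n) \<longlongrightarrow> L) sequentially"
    unfolding hx using ln_squeeze[OF rA(3,1,4,5)] rA(1,2) by (intro exI[of _ "ln r"]) simp
qed




lemma Bmat_comp: "(Bmat *v x)$1 = 2 * x$1 + x$2" "(Bmat *v x)$2 = x$1 + x$2"
  by (simp_all add: matrix_vector_mult_def Bmat_def sum_2)

lemma eig_facts: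
  assumes "x \<noteq> 0" "Bmat *v x = c *s x"
  shows "2 * x$1 + x$2 = c * x$1" "x$1 + x$2 = c * x$2" "(c - 1) * (c - 2) = 1"
proof -
  show h1: "2 * x$1 + x$2 = c * x$1" using arg_cong[OF assms(2), of "\<lambda>v. v$1"] by (simp add: Bmat_comp)
  show h2: "x$1 + x$2 = c * x$2" using arg_cong[OF assms(2), of "\<lambda>v. v$2"] by (simp add: Bmat_comp)
  have "x$1 \<noteq> 0"
  proof
    assume "x$1 = 0"
    then have "x$2 = 0" using h1 by simp
    then show False using assms(1) \<open>x$1 = 0\<close> by (simp add: vec_eq_iff forall_2)
  qed
  moreover have "x$1 = (c-1)*(c-2) * x$1"
  proof -
    have "x$2 = (c - 2) * x$1" using h1 by (simp add: algebra_simps)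
    moreover have "x$1 = (c - 1) * x$2" using h2 by (simp add: algebra_simps)
    ultimately show ?thesis by (metis mult.assoc)
  qed
  ultimately show "(c - 1) * (c - 2) = 1" by (metis mult_cancel_right1)
qed

lemma quad_root:
  fixes r T l \<mu> :: real
  assumes "r * r = T * T - 4 * \<mu>" "l = (T + r) / 2 \<or> l = (T - r) / 2"
  shows "l * l - T * l + \<mu> = 0"
proof -
  have "l * l - T * l + \<mu> = ((2*l - T) * (2*l - T) - (T * T - 4 * \<mu>)) / 4"
    by (simp add: algebra_simps)
  also have "(2*l - T) * (2*l - T) = r * r"
  proof -
    have "2*l - T = r \<or> 2*l - T = -r" using assms(2) by auto
    then show ?thesis by auto
  qed
  finally show ?thesis using assms(1) by simp
qed




theorem corollaryD:
  fixes q s :: "real^2" and \<mu> \<nu> :: real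
  assumes "q \<noteq> 0" and "Bmat *v q = \<mu> *s q" and "\<mu> > 1"
      and "s \<noteq> 0" and "Bmat *v s = \<nu> *s s" and "\<nu> < 1"
  shows "partially_hyperbolic Phi Df (\<lambda>p. span {es s p}) (\<lambda>p. span {v1 p}) (\<lambda>p. span {v2 q p})
    \<and> (\<forall>p g. g \<in> Gam \<longrightarrow> v1 (hmul p g) = DRt g p (v1 p) \<and> v2 q (hmul p g) = DRt g p (v2 q p))
    \<and> (\<exists>I. open I \<and> I \<noteq> {} \<and> I \<subseteq> {0..2*pi} \<and>
        (\<forall>\<theta>\<in>I. (\<exists>Es Ec Eu. partially_hyperbolic Phi (Ftheta \<theta> q s) Es Ec Eu)
                 \<and> nonuniformly_hyperbolic Phi (Ftheta \<theta> q s)))"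
proof -
  note qe = eig_facts[OF assms(1,2)] and se = eig_facts[OF assms(4,5)]
  have nu0: "\<nu> > 0"
  proof (rule ccontr)
    assume "\<not> \<nu> > 0"
    then have "1 * 2 \<le> (1 - \<nu>) * (2 - \<nu>)" by (intro mult_mono) auto
    moreover have "(1 - \<nu>) * (2 - \<nu>) = (\<nu> - 1) * (\<nu> - 2)" by (simp add: algebra_simps)
    ultimately show False using se(3) by simp
  qed
  define S where "S = mk3 (s$1) (s$2) 0"
  define Q where "Q = mk3 (q$1) (q$2) 0"
  define Z where "Z = (mk3 0 0 1 :: real^3)"
  have S0: "S \<noteq> 0" using assms(4) unfolding S_def by (auto simp: vec_eq_iff forall_2 forall_3 mk3_def)
  have Q0: "Q \<noteq> 0" using assms(1) unfolding Q_def by (auto simp: vec_eq_iff forall_2 forall_3 mk3_def)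
  have Z0: "Z \<noteq> 0" unfolding Z_def by (auto simp: vec_eq_iff forall_3 mk3_def)
  have AS: "A0 S = \<nu> *\<^sub>R S" unfolding S_def by (rule vec3_eqI) (simp_all add: A0_def se(1,2))
  have AQ: "A0 Q = \<mu> *\<^sub>R Q" unfolding Q_def by (rule vec3_eqI) (simp_all add: A0_def qe(1,2))
  have AZ: "A0 Z = 1 *\<^sub>R Z" unfolding Z_def by (rule vec3_eqI) (simp_all add: A0_def)
  have triSZQ: "tri S Z Q" by (rule tri_eigen[OF linear_A0 AS AZ AQ S0 Z0 Q0]) (use assms nu0 in auto)
  have triSQZ: "tri S Q Z" by (rule tri_eigen[OF linear_A0 AS AQ AZ S0 Q0 Z0]) (use assms nu0 in auto)
  have esU: "es s p = Ui p S" and v2U: "v2 q p = Ui p Q" and v1U: "v1 p = Ui p Z" for p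
    by (rule vec3_eqI; simp add: es_def v2_def v1_def Ui_def S_def Q_def Z_def)+
  have part1: "partially_hyperbolic Phi Df (\<lambda>p. span {es s p}) (\<lambda>p. span {v1 p}) (\<lambda>p. span {v2 q p})"
    unfolding esU v1U v2U
    by (rule ph_framework[OF Df_conj linear_A0 AS AZ AQ triSZQ]) (use assms nu0 in auto)
  have part2: "\<forall>p g. g \<in> Gam \<longrightarrow> v1 (hmul p g) = DRt g p (v1 p) \<and> v2 q (hmul p g) = DRt g p (v2 q p)"
    by (simp add: v1U v2U DRt_Ui)
  define I where "I = {\<theta>. 0 < \<theta> \<and> \<theta> < pi/2 \<and> 4 * \<mu> < ((1 + \<mu>) * cos \<theta>)^2}"
  have openI: "open I" unfolding I_def
    by (intro open_Collect_conj open_Collect_less continuous_intros)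
  have neI: "I \<noteq> {}"
  proof -
    define a where "a = 4 * \<mu> / (1 + \<mu>)^2"
    have a0: "0 < a" using assms(3) by (simp add: a_def)
    have a1: "a < 1"
    proof -
      have "(1 + \<mu>)^2 - 4 * \<mu> = (\<mu> - 1)^2" by (simp add: power2_eq_square algebra_simps)
      moreover have "(\<mu> - 1)^2 > 0" using assms(3) by simp
      ultimately have "4 * \<mu> < (1 + \<mu>)^2" by linarith
      then show ?thesis unfolding a_def using assms(3) by (simp add: pos_divide_less_eq)
    qed
    define k where "k = (1 + a) / 2"
    have k01: "0 < k" "k < 1" using a0 a1 unfolding k_def by auto
    have "k^2 - a = ((1 - a) / 2)^2" unfolding k_def by (simp add: power2_eq_square field_simps)
    moreover have "((1 - a) / 2)^2 > 0" using a1 by simp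
    ultimately have k: "0 < k" "k < 1" "a < k^2" using k01 by linarith+
    define \<theta> where "\<theta> = arccos k"
    have c: "cos \<theta> = k" unfolding \<theta>_def using k by (intro cos_arccos) auto
    have t0: "0 < \<theta>" unfolding \<theta>_def using arccos_lt_bounded[of k] k by auto
    have t1: "\<theta> < pi/2" unfolding \<theta>_def using arccos_less_arccos[of 0 k] k by simp
    have "4 * \<mu> < ((1 + \<mu>) * cos \<theta>)^2"
    proof -
      have "4 * \<mu> = a * (1 + \<mu>)^2" using assms(3) by (simp add: a_def)
      also have "\<dots> < k^2 * (1 + \<mu>)^2" using k(3) assms(3) by (intro mult_strict_right_mono) auto
      finally show ?thesis by (simp add: c power_mult_distrib mult.commute)
    qed
    then have "\<theta> \<in> I" using t0 t1 unfolding I_def by simp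
    then show ?thesis by blast
  qed
  have Isub: "I \<subseteq> {0..2*pi}" unfolding I_def using pi_gt_zero by auto
  have part3: "(\<exists>Es Ec Eu. partially_hyperbolic Phi (Ftheta \<theta> q s) Es Ec Eu)
                 \<and> nonuniformly_hyperbolic Phi (Ftheta \<theta> q s)" if th: "\<theta> \<in> I" for \<theta>
  proof -
    define cs where "cs = cos \<theta>"
    define sn where "sn = sin \<theta>"
    have th0: "0 < \<theta>" "\<theta> < pi/2" "4 * \<mu> < ((1 + \<mu>) * cs)^2" using th by (auto simp: I_def cs_def)
    have sn0: "sn > 0" unfolding sn_def using th0 by (intro sin_gt_zero) auto
    have cs0: "cs > 0" unfolding cs_def using th0 by (intro cos_gt_zero) auto
    have sc: "sn * sn + cs * cs = 1" unfolding sn_def cs_def using sin_cos_squared_add[of \<theta>]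
      by (simp add: power2_eq_square)
    have cs1: "cs < 1"
    proof (rule ccontr)
      assume "\<not> cs < 1"
      then have "1 * 1 \<le> cs * cs" by (intro mult_mono) auto
      moreover have "sn * sn > 0" using sn0 by simp
      ultimately show False using sc by linarith
    qed
    obtain R0 where R0: "linear R0" "R0 S = S" "R0 Q = cs *\<^sub>R Q + sn *\<^sub>R Z" "R0 Z = (- sn) *\<^sub>R Q + cs *\<^sub>R Z"
      using ext3[OF triSQZ] by blast
    have Rot_eq: "Rot \<theta> q s p = Ui p \<circ> R0 \<circ> U p" for p
    proof -
      define P where "P L \<longleftrightarrow> linear L \<and> L (es s p) = es s p \<and>
        L (v2 q p) = cos \<theta> *\<^sub>R v2 q p + sin \<theta> *\<^sub>R v1 p \<and>
        L (v1 p) = (- sin \<theta>) *\<^sub>R v2 q p + cos \<theta> *\<^sub>R v1 p" for L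
      have lin0: "linear (Ui p \<circ> R0 \<circ> U p)" by (intro linear_compose linear_U linear_Ui R0(1))
      have P0: "P (Ui p \<circ> R0 \<circ> U p)" unfolding P_def using lin0
        by (simp add: esU v1U v2U R0 linear_add[OF linear_Ui] linear_scale[OF linear_Ui] linear_diff[OF linear_Ui] cs_def sn_def)
      have PR: "P (Rot \<theta> q s p)" unfolding Rot_def using someI[of P, OF P0] unfolding P_def .
      have tp: "tri (es s p) (v2 q p) (v1 p)"
        by (rule tri_map[OF linear_U[of p]]) (simp add: esU v1U v2U triSQZ)
      show ?thesis by (rule lin_eq3[OF tp]) (use PR P0 in \<open>simp_all add: P_def\<close>)
    qed
    define C where "C = A0 \<circ> R0"
    have linC: "linear C" unfolding C_def by (intro linear_compose linear_A0 R0(1))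
    have Fconj: "Ftheta \<theta> q s p = Ui (Phi p) \<circ> C \<circ> U p" for p
      by (simp add: Ftheta_def Rot_eq Df_conj C_def fun_eq_iff)
    have CS: "C S = \<nu> *\<^sub>R S" by (simp add: C_def R0 AS)
    define T where "T = (1 + \<mu>) * cs"
    define r where "r = sqrt (T * T - 4 * \<mu>)"
    have D0: "T * T - 4 * \<mu> > 0" using th0(3) by (simp add: T_def power2_eq_square)
    have r0: "r > 0" and rr: "r * r = T * T - 4 * \<mu>" unfolding r_def using D0 by auto
    have Tpos: "T > 0" unfolding T_def using cs0 assms(3) by simp
    have T2: "T > 2"
    proof (rule ccontr)
      assume "\<not> T > 2"
      then have "T * T \<le> 2 * 2" using Tpos by (intro mult_mono) auto
      then show False using D0 assms(3) by linarith
    qed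
    have Tm: "T < 1 + \<mu>" unfolding T_def using cs1 assms(3) by simp
    define l1 where "l1 = (T + r) / 2"
    define l2 where "l2 = (T - r) / 2"
    have rT: "r < T - 2"
    proof (rule ccontr)
      assume "\<not> r < T - 2"
      then have "(T - 2) * (T - 2) \<le> r * r" using T2 by (intro mult_mono) auto
      moreover have "(T - 2) * (T - 2) = T * T - 4 * T + 4" by (simp add: algebra_simps)
      ultimately show False using rr Tm by linarith
    qed
    have l2g: "1 < l2" "l2 < l1" unfolding l1_def l2_def using rT r0 by auto
    have eigX: "C X = l *\<^sub>R X" if lq: "l * l - T * l + \<mu> = 0" and X: "X = (l - cs) *\<^sub>R Q + sn *\<^sub>R Z" for l X
    proof -
      have key: "(l - cs) * cs * \<mu> - sn * sn * \<mu> = l * (l - cs)"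
        using lq sc unfolding T_def by algebra
      have R0X: "R0 X = (l - cs) *\<^sub>R (cs *\<^sub>R Q + sn *\<^sub>R Z) + sn *\<^sub>R ((- sn) *\<^sub>R Q + cs *\<^sub>R Z)"
        unfolding X by (simp only: linear_add[OF R0(1)] linear_scale[OF R0(1)] R0)
      have E: "C X = (l - cs) *\<^sub>R ((cs * \<mu>) *\<^sub>R Q + sn *\<^sub>R Z) + sn *\<^sub>R ((- sn * \<mu>) *\<^sub>R Q + cs *\<^sub>R Z)"
        unfolding C_def comp_apply R0X using AQ AZ
        by (simp only: linear_add[OF linear_A0] linear_scale[OF linear_A0] scaleR_scaleR scaleR_one mult.commute)
      have F: "(l - cs) *\<^sub>R ((cs * \<mu>) *\<^sub>R Q + sn *\<^sub>R Z) + sn *\<^sub>R ((- sn * \<mu>) *\<^sub>R Q + cs *\<^sub>R Z)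
          = l *\<^sub>R ((l - cs) *\<^sub>R Q + sn *\<^sub>R Z)"
      proof -
        have key2: "(l - cs) * (cs * \<mu> * t) - sn * (sn * \<mu> * t) = l * ((l - cs) * t)" for t
        proof -
          have "(l - cs) * (cs * \<mu> * t) - sn * (sn * \<mu> * t) = ((l - cs) * cs * \<mu> - sn * sn * \<mu>) * t"
            by (simp add: algebra_simps)
          also have "\<dots> = l * ((l - cs) * t)" unfolding key by simp
          finally show ?thesis .
        qed
        show ?thesis
          apply (rule vec3_eqI) apply (simp_all add: Q_def Z_def key2) apply (simp add: algebra_simps) done
      qed
      show ?thesis using E F X by simp
    qed
    define X1 where "X1 = (l1 - cs) *\<^sub>R Q + sn *\<^sub>R Z"
    define X2 where "X2 = (l2 - cs) *\<^sub>R Q + sn *\<^sub>R Z"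
    have CX1: "C X1 = l1 *\<^sub>R X1"
      by (rule eigX[OF quad_root[OF rr]]) (simp_all add: l1_def X1_def)
    have CX2: "C X2 = l2 *\<^sub>R X2"
      by (rule eigX[OF quad_root[OF rr]]) (simp_all add: l2_def X2_def)
    have "X1$3 = sn" "X2$3 = sn" by (simp_all add: X1_def X2_def Q_def Z_def)
    then have X0: "X1 \<noteq> 0" "X2 \<noteq> 0" using sn0 by auto
    have triX: "tri S X2 X1"
      by (rule tri_eigen[OF linC CS CX2 CX1 S0 X0(2) X0(1)]) (use l2g assms(6) in auto)
    have "partially_hyperbolic Phi (Ftheta \<theta> q s) (\<lambda>p. span {Ui p S}) (\<lambda>p. span {Ui p X2}) (\<lambda>p. span {Ui p X1})"
      by (rule ph_framework[OF Fconj linC CS CX2 CX1 triX]) (use l2g assms(6) nu0 in auto)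
    moreover have "nonuniformly_hyperbolic Phi (Ftheta \<theta> q s)"
      by (rule nuh_framework[OF Fconj linC CS CX2 CX1 triX]) (use l2g assms(6) nu0 in auto)
    ultimately show ?thesis by blast
  qed
  have part3': "\<exists>I. open I \<and> I \<noteq> {} \<and> I \<subseteq> {0..2*pi} \<and>
        (\<forall>\<theta>\<in>I. (\<exists>Es Ec Eu. partially_hyperbolic Phi (Ftheta \<theta> q s) Es Ec Eu)
                 \<and> nonuniformly_hyperbolic Phi (Ftheta \<theta> q s))"
    by (intro exI[of _ I] conjI openI neI Isub ballI part3)
  show ?thesis using part1 part2 part3' by (intro conjI)
qed


end
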